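(* Let $k\ge2$, $0<a<1$, $d\ge2$, and let $\{\eta_n\}_{n\ge0}\subset\mathbb{C}\setminus\{0\}$ satisfy $|\eta_n|\le a^{d^n}$ for all $n$. Let \[ F_n(z_1,\dots,z_k)=(\eta_n z_k,\ z_2^d+\eta_n z_1,\ \dots,\ z_k^d+\eta_n z_{k-1}). \] Let $R>1+a$, and for $1\le i\le k$ let $V_i=\{z\in\mathbb{C}^k:\|z\|_\infty=|z_i|\ge R\}$, and put $V^+=\bigcup_{i=2}^kV_i$. Then $F_n(V^+)\subset V^+$ for every $n\ge1$.
   Context: $\|z\|_\infty=\max_{1\le i\le k}|z_i|$. *)

theory Defs
  imports Complex_Main
begin

text \<open>Points of C^k are modelled as functions z :: nat \<Rightarrow> complex with coordinates
  z 1, ..., z k and z j = 0 for j outside {1..k}.\<close>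

definition ck :: "nat \<Rightarrow> (nat \<Rightarrow> complex) set" where
  "ck k = {z. \<forall>j. j \<notin> {1..k} \<longrightarrow> z j = 0}"

definition supnorm :: "nat \<Rightarrow> (nat \<Rightarrow> complex) \<Rightarrow> real" where
  "supnorm k z = Max ((\<lambda>i. cmod (z i)) ` {1..k})"

definition Fmap :: "nat \<Rightarrow> nat \<Rightarrow> complex \<Rightarrow> (nat \<Rightarrow> complex) \<Rightarrow> (nat \<Rightarrow> complex)" where
  "Fmap k d c z = (\<lambda>i. if i = 1 then c * z k
                        else if 2 \<le> i \<and> i \<le> k then z i ^ d + c * z (i - 1)
                        else 0)"

definition Vset :: "nat \<Rightarrow> real \<Rightarrow> nat \<Rightarrow> (nat \<Rightarrow> complex) set" where
  "Vset k R i = {z \<in> ck k. supnorm k z = cmod (z i) \<and> cmod (z i) \<ge> R}"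

definition Vplus :: "nat \<Rightarrow> real \<Rightarrow> (nat \<Rightarrow> complex) set" where
  "Vplus k R = (\<Union>i\<in>{2..k}. Vset k R i)"

end

theory Submission
  imports Defs
begin

theorem lemma3p4:
  fixes k d :: nat and a R :: real and eta :: "nat \<Rightarrow> complex"
  assumes "k \<ge> 2" and "0 < a" and "a < 1" and "d \<ge> 2"
    and "\<And>n. eta n \<noteq> 0"
    and "\<And>n. cmod (eta n) \<le> a ^ (d ^ n)"
    and "R > 1 + a"
  shows "\<forall>n\<ge>1. Fmap k d (eta n) ` Vplus k R \<subseteq> Vplus k R"
proof (intro allI impI subsetI)
  fix n :: nat and w assume n: "n \<ge> 1" and "w \<in> Fmap k d (eta n) ` Vplus k R"
  then obtain z where zV: "z \<in> Vplus k R" and wdef: "w = Fmap k d (eta n) z" by auto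
  then obtain i where i: "i \<in> {2..k}" and zi: "z \<in> Vset k R i" unfolding Vplus_def by auto
  define c where "c = eta n"
  define M where "M = cmod (z i)"
  have zck: "z \<in> ck k" and supz: "supnorm k z = M" and MR: "M \<ge> R"
    using zi unfolding Vset_def M_def by auto
  have Mge: "cmod (z l) \<le> M" if "l \<in> {1..k}" for l
  proof -
    have "cmod (z l) \<le> Max ((\<lambda>i. cmod (z i)) ` {1..k})"
      by (rule Max_ge) (use that in auto)
    thus ?thesis using supz unfolding supnorm_def by simp
  qed
  have "d ^ n \<ge> (1::nat)" using assms(4) by simp
  have "a ^ (d ^ n) \<le> a ^ 1"
    by (rule power_decreasing) (use \<open>d ^ n \<ge> 1\<close> assms(2,3) in auto)
  hence ca: "cmod c \<le> a" using assms(6)[of n] unfolding c_def by simp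
  have M1: "M > 1 + a" using MR assms(7) by simp
  have wi: "w i = z i ^ d + c * z (i - 1)" using i unfolding wdef Fmap_def c_def by auto
  have "cmod (c * z (i - 1)) \<le> a * M"
  proof -
    have "cmod (z (i - 1)) \<le> M" using i by (intro Mge) auto
    hence "cmod c * cmod (z (i-1)) \<le> a * M"
      using ca assms(2) by (intro mult_mono) (auto simp: M_def)
    thus ?thesis by (simp add: norm_mult)
  qed
  moreover have "cmod (z i ^ d) \<ge> M * M"
  proof -
    have "M ^ 2 \<le> M ^ d" using M1 assms(4) assms(2) by (intro power_increasing) auto
    thus ?thesis by (simp add: norm_power M_def power2_eq_square)
  qed
  moreover have "cmod (z i ^ d) - cmod (- (c * z (i - 1))) \<le> cmod (z i ^ d + c * z (i - 1))"
    using norm_diff_ineq[of "z i ^ d" "c * z (i - 1)"] by simp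
  ultimately have "cmod (w i) \<ge> M * M - a * M" using wi by simp
  moreover have "M * M - a * M = M * (M - a)" by (simp add: algebra_simps)
  moreover have "M * (M - a) > M * 1" using M1 assms(2) by (intro mult_strict_left_mono) auto
  ultimately have wiM: "cmod (w i) > M" by simp
  have w1: "cmod (w 1) \<le> a * M"
  proof -
    have "cmod (z k) \<le> M" using assms(1) by (intro Mge) auto
    hence "cmod c * cmod (z k) \<le> a * M"
      using ca assms(2) by (intro mult_mono) (auto simp: M_def)
    thus ?thesis unfolding wdef Fmap_def c_def by (simp add: norm_mult)
  qed
  have aMM: "a * M < M" using M1 assms(2,3) mult_strict_right_mono[of a 1 M] by simp
  define S where "S = (\<lambda>l. cmod (w l)) ` {2..k}"
  have fS: "finite S" and neS: "S \<noteq> {}" using i unfolding S_def by auto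
  have "Max S \<in> S" using fS neS by (rule Max_in)
  then obtain j where j: "j \<in> {2..k}" and wj: "cmod (w j) = Max S" unfolding S_def by auto
  have jmax: "cmod (w l) \<le> cmod (w j)" if "l \<in> {2..k}" for l
    using wj fS that unfolding S_def by auto
  have wij: "cmod (w i) \<le> cmod (w j)" using jmax i by simp
  have sup: "supnorm k w = cmod (w j)"
    unfolding supnorm_def
  proof (rule Max_eqI)
    show "finite ((\<lambda>i. cmod (w i)) ` {1..k})" by simp
    show "cmod (w j) \<in> (\<lambda>i. cmod (w i)) ` {1..k}" using j by auto
    fix y assume "y \<in> (\<lambda>i. cmod (w i)) ` {1..k}"
    then obtain l where l: "l \<in> {1..k}" and y: "y = cmod (w l)" by auto
    show "y \<le> cmod (w j)"
    proof (cases "l = 1")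
      case True thus ?thesis using y w1 aMM wiM wij by simp
    next
      case False thus ?thesis using y l jmax by auto
    qed
  qed
  have wck: "w \<in> ck k" using assms(1) unfolding ck_def wdef Fmap_def by auto
  have "w \<in> Vset k R j" unfolding Vset_def using wck sup wij wiM MR by auto
  thus "w \<in> Vplus k R" unfolding Vplus_def using j by auto
qed

end
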